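(* Let $R$ be a ring with unity and involution $*$, and let $a,b,c\in R$. Then $a$ is left dual $(b,c)$-core invertible if and only if $ab$ is left $(b^*,c)$-invertible. In this case, an element $x\in R$ is a left dual $(b,c)$-core inverse of $a$ if and only if $x$ is a left $(b^*,c)$-inverse of $ab$.
   Context: For $u,b,c\in R$, $u$ is left dual $(b,c)$-core invertible if there exists $x\in Rc$ with $bxub=b$ and $(xub)^*=xub$; such $x$ is a left dual $(b,c)$-core inverse of $u$. $u$ is left $(b,c)$-invertible if there exists $x\in Rc$ with $xub=b$ (equivalently $b\in Rcub$); such $x$ is a left $(b,c)$-inverse of $u$. *)

theory Defs
  imports Main
begin

definition ring_involution :: "('a::ring_1 \<Rightarrow> 'a) \<Rightarrow> bool" where
  "ring_involution s \<longleftrightarrow>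
     (\<forall>x y. s (x + y) = s x + s y) \<and>
     (\<forall>x y. s (x * y) = s y * s x) \<and>
     (\<forall>x. s (s x) = x)"

definition left_dual_bc_core_inverse ::
  "('a::ring_1 \<Rightarrow> 'a) \<Rightarrow> 'a \<Rightarrow> 'a \<Rightarrow> 'a \<Rightarrow> 'a \<Rightarrow> bool" where
  "left_dual_bc_core_inverse s b c u x \<longleftrightarrow>
     (\<exists>r. x = r * c) \<and> b * x * u * b = b \<and> s (x * u * b) = x * u * b"

definition left_dual_bc_core_invertible ::
  "('a::ring_1 \<Rightarrow> 'a) \<Rightarrow> 'a \<Rightarrow> 'a \<Rightarrow> 'a \<Rightarrow> bool" where
  "left_dual_bc_core_invertible s b c u \<longleftrightarrow> (\<exists>x. left_dual_bc_core_inverse s b c u x)"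

definition left_bc_inverse :: "'a::ring_1 \<Rightarrow> 'a \<Rightarrow> 'a \<Rightarrow> 'a \<Rightarrow> bool" where
  "left_bc_inverse b c u x \<longleftrightarrow> (\<exists>r. x = r * c) \<and> x * u * b = b"

definition left_bc_invertible :: "'a::ring_1 \<Rightarrow> 'a \<Rightarrow> 'a \<Rightarrow> bool" where
  "left_bc_invertible b c u \<longleftrightarrow> (\<exists>x. left_bc_inverse b c u x)"

end

theory Submission
  imports Defs
begin

lemma key:
  fixes s :: "'a::ring_1 \<Rightarrow> 'a" and a b c x :: 'a
  assumes inv: "ring_involution s"
  shows "left_dual_bc_core_inverse s b c a x \<longleftrightarrow> left_bc_inverse (s b) c (a * b) x"
proof -
  have m: "\<And>u v. s (u * v) = s v * s u" and ss: "\<And>u. s (s u) = u"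
    using inv unfolding ring_involution_def by auto
  define p where "p = x * a * b"
  have p2: "x * (a * b) = p" by (simp add: p_def mult.assoc)
  have bp: "b * x * a * b = b * p" by (simp add: p_def mult.assoc)
  show ?thesis
    unfolding left_dual_bc_core_inverse_def left_bc_inverse_def p2 bp p_def[symmetric]
  proof (intro iffI conjI)
    assume h: "(\<exists>r. x = r * c) \<and> b * p = b \<and> s p = p"
    thus "\<exists>r. x = r * c" by blast
    have "s b = s (b * p)" using h by simp
    also have "\<dots> = p * s b" using h m by metis
    finally show "p * s b = s b" by simp
  next
    assume h: "(\<exists>r. x = r * c) \<and> p * s b = s b"
    thus "\<exists>r. x = r * c" by blast
    have sp: "s p = s b * s (x * a)" by (simp add: p_def m)
    have "p * s p = s p" using h by (simp add: sp mult.assoc[symmetric])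
    have e: "s (p * s p) = p * s p" using m ss by metis
    have psym: "s p = p" using e ss \<open>p * s p = s p\<close> by metis
    have "b = s (p * s b)" using h ss by simp
    also have "\<dots> = b * s p" using m ss by simp
    finally show "b * p = b" using psym by simp
    show "s p = p" by (rule psym)
  qed
qed

theorem theorem3p11:
  fixes s :: "'a::ring_1 \<Rightarrow> 'a" and a b c :: 'a
  assumes "ring_involution s"
  shows "(left_dual_bc_core_invertible s b c a \<longleftrightarrow> left_bc_invertible (s b) c (a * b))
         \<and> (left_dual_bc_core_invertible s b c a \<longrightarrow>
              (\<forall>x. left_dual_bc_core_inverse s b c a x \<longleftrightarrow> left_bc_inverse (s b) c (a * b) x))"
  using key[OF assms] unfolding left_dual_bc_core_invertible_def left_bc_invertible_def
  by blast

end
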